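(* Let $C>0$. There is a constant $C_1>0$ depending only on $C$ such that for any image width $w\geqslant2$ and any two lines $l,k$ that are integer at an image of width $w$ with different elevations $e_1\neq e_2$, $$N\bigl(s(l,C)\cap s(k,C)\bigr)\leqslant\frac{C_1 w}{|e_1-e_2|}.$$
   Context: For a line $l\subset\mathbb{R}^2$ and $C>0$, $s(l,C)=\{r\in\mathbb{R}^2\mid\rho(r,l)\leqslant C/2\}$, $\rho$ the Euclidean distance. A line is mostly horizontal inclined to the right if it has equation $y=ax+b$ with $0\leqslant a\leqslant1$; it is integer at an image of width $w$ if $a=\frac{e}{w-1}$ for some $e\in\{0,1,\dots,w-1\}$, called its elevation. For $D\subseteq\mathbb{R}^2$, $N(D)=|\mathbb{Z}^2\cap D|$. *)

theory Defs
  imports "HOL-Analysis.Analysis"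
begin

text \<open>Points of the plane are pairs of reals; the product metric on real \<times> real is Euclidean.\<close>

definition line :: "real \<Rightarrow> real \<Rightarrow> (real \<times> real) set" where
  "line a b = {(x, y). y = a * x + b}"

definition strip :: "(real \<times> real) set \<Rightarrow> real \<Rightarrow> (real \<times> real) set" where
  "strip l C = {r. infdist r l \<le> C / 2}"

definition integer_line_elev :: "nat \<Rightarrow> nat \<Rightarrow> (real \<times> real) set \<Rightarrow> bool" where
  "integer_line_elev w e l \<longleftrightarrow> e \<le> w - 1 \<and> (\<exists>b. l = line (real e / (real w - 1)) b)"

definition lattice_count :: "(real \<times> real) set \<Rightarrow> nat" where
  "lattice_count D = card {p :: int \<times> int. (real_of_int (fst p), real_of_int (snd p)) \<in> D}"

end

theory Submission
  imports Defs
begin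

lemma strip_bound:
  assumes a: "0 \<le> a" "a \<le> 1" and r: "(x, y) \<in> strip (line a b) C"
  shows "\<bar>y - a * x - b\<bar> \<le> C"
proof -
  have ne: "line a b \<noteq> {}" unfolding line_def by auto
  have lb: "\<bar>y - a * x - b\<bar> / 2 \<le> dist (x, y) p" if pl: "p \<in> line a b" for p
  proof -
    obtain u where p0: "p = (u, a * u + b)" using pl unfolding line_def by auto
    define v where "v = a * u + b"
    have p: "p = (u, v)" using p0 v_def by simp
    have d: "dist (x, y) p = sqrt ((x - u)^2 + (y - v)^2)"
      using p by (simp add: dist_Pair_Pair dist_real_def)
    have h1: "\<bar>x - u\<bar> \<le> dist (x, y) p" unfolding d by (rule real_le_rsqrt) (simp add: power2_abs)
    have h2: "\<bar>y - v\<bar> \<le> dist (x, y) p" unfolding d by (rule real_le_rsqrt) (simp add: power2_abs)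
    have "\<bar>y - a * x - b\<bar> = \<bar>(y - v) + a * (u - x)\<bar>" using v_def by (simp add: algebra_simps)
    also have "\<dots> \<le> \<bar>y - v\<bar> + a * \<bar>x - u\<bar>" using a abs_triangle_ineq[of "y - v" "a * (u - x)"] by (simp add: abs_mult abs_minus_commute)
    also have "\<dots> \<le> \<bar>y - v\<bar> + \<bar>x - u\<bar>" using a by (simp add: mult_left_le_one_le)
    finally have "\<bar>y - a * x - b\<bar> \<le> \<bar>y - v\<bar> + \<bar>x - u\<bar>" .
    also have "\<dots> \<le> dist (x, y) p + dist (x, y) p" using add_mono[OF h2 h1] .
    finally show ?thesis by simp
  qed
  have "\<bar>y - a * x - b\<bar> / 2 \<le> infdist (x, y) (line a b)"
    unfolding infdist_notempty[OF ne] by (rule cINF_greatest[OF ne lb])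
  with r show ?thesis unfolding strip_def by simp
qed

lemma int_interval_card:
  fixes lo L :: real
  assumes "L \<ge> 0"
  shows "finite {x::int. lo \<le> of_int x \<and> of_int x \<le> lo + L}
    \<and> real (card {x::int. lo \<le> of_int x \<and> of_int x \<le> lo + L}) \<le> L + 1"
proof -
  have eq: "{x::int. lo \<le> of_int x \<and> of_int x \<le> lo + L} = {ceiling lo .. floor (lo + L)}"
    by (auto simp: ceiling_le_iff le_floor_iff)
  have "real_of_int (floor (lo + L) - ceiling lo) \<le> L"
    using floor_le_iff[of "lo+L"] of_int_floor_le[of "lo+L"] le_of_int_ceiling[of lo] by linarith
  moreover have "real (nat (floor (lo + L) - ceiling lo + 1)) \<le> L + 1" if "real_of_int (floor (lo + L) - ceiling lo) \<le> L"
  proof (cases "floor (lo + L) - ceiling lo + 1 \<ge> 0")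
    case True then show ?thesis using that by (simp add: of_nat_nat)
  next
    case False then show ?thesis using assms by simp
  qed
  ultimately show ?thesis unfolding eq by simp
qed

theorem corollary1:
  fixes C :: real
  assumes "C > 0"
  shows "\<exists>C1 > 0. \<forall>(w::nat) (e1::nat) (e2::nat) l k.
           w \<ge> 2 \<longrightarrow> integer_line_elev w e1 l \<longrightarrow> integer_line_elev w e2 k \<longrightarrow> e1 \<noteq> e2 \<longrightarrow>
           real (lattice_count (strip l C \<inter> strip k C))
             \<le> C1 * real w / \<bar>real e1 - real e2\<bar>"
proof (intro exI[of _ "(4*C+1)*(2*C+1)"] conjI allI impI)
  show "0 < (4*C+1)*(2*C+1)" using assms by simp
  fix w e1 e2 :: nat and l k
  assume w: "w \<ge> 2" and l: "integer_line_elev w e1 l" and k: "integer_line_elev w e2 k" and ne: "e1 \<noteq> e2"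
  define W where "W = real w - 1"
  have W1: "W \<ge> 1" using w unfolding W_def by simp
  obtain b1 where b1: "l = line (real e1 / W) b1" and e1: "e1 \<le> w - 1"
    using l unfolding integer_line_elev_def W_def by auto
  obtain b2 where b2: "k = line (real e2 / W) b2" and e2: "e2 \<le> w - 1"
    using k unfolding integer_line_elev_def W_def by auto
  define a1 where "a1 = real e1 / W"
  define a2 where "a2 = real e2 / W"
  have e1W: "real e1 \<le> W" using e1 w unfolding W_def by linarith
  have e2W: "real e2 \<le> W" using e2 w unfolding W_def by linarith
  have a1r: "0 \<le> a1" "a1 \<le> 1" using e1W W1 unfolding a1_def by auto
  have a2r: "0 \<le> a2" "a2 \<le> 1" using e2W W1 unfolding a2_def by auto
  define D where "D = \<bar>real e1 - real e2\<bar>"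
  have "e1 + 1 \<le> e2 \<or> e2 + 1 \<le> e1" using ne by linarith
  hence "real e1 + 1 \<le> real e2 \<or> real e2 + 1 \<le> real e1" by (metis of_nat_1 of_nat_add of_nat_le_iff)
  hence D1: "D \<ge> 1" unfolding D_def by linarith
  have DW: "D \<le> W" using e1W e2W unfolding D_def by linarith
  define \<delta> where "\<delta> = a1 - a2"
  have "\<delta> = (real e1 - real e2) / W" unfolding \<delta>_def a1_def a2_def by (rule diff_divide_distrib[symmetric])
  hence ad: "\<bar>\<delta>\<bar> = D / W" unfolding D_def using W1 by simp
  have adpos: "\<bar>\<delta>\<bar> > 0" using ad D1 W1 by simp
  define c where "c = b1 - b2"
  define lo where "lo = - c / \<delta> - 2 * C / \<bar>\<delta>\<bar>"
  define L where "L = 4 * C / \<bar>\<delta>\<bar>"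
  define X where "X = {x::int. lo \<le> of_int x \<and> of_int x \<le> lo + L}"
  define Y where "Y = (\<lambda>x::int. {y::int. (a1 * of_int x + b1 - C) \<le> of_int y \<and> of_int y \<le> (a1 * of_int x + b1 - C) + 2 * C})"
  have L0: "L \<ge> 0" unfolding L_def using assms by simp
  have X: "finite X" "real (card X) \<le> L + 1" using int_interval_card[OF L0, of lo] unfolding X_def by auto
  have Y: "finite (Y x)" "real (card (Y x)) \<le> 2 * C + 1" for x
    using int_interval_card[of "2*C" "a1 * of_int x + b1 - C"] assms unfolding Y_def by auto
  have sub: "{p :: int \<times> int. (real_of_int (fst p), real_of_int (snd p)) \<in> strip l C \<inter> strip k C} \<subseteq> Sigma X Y"
  proof (clarsimp)
    fix x y :: int
    assume s1: "(real_of_int x, real_of_int y) \<in> strip l C" and s2: "(real_of_int x, real_of_int y) \<in> strip k C"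
    have i1: "\<bar>of_int y - a1 * of_int x - b1\<bar> \<le> C"
      using strip_bound[OF a1r, of "of_int x" "of_int y" b1 C] s1 b1 unfolding a1_def by simp
    have i2: "\<bar>of_int y - a2 * of_int x - b2\<bar> \<le> C"
      using strip_bound[OF a2r, of "of_int x" "of_int y" b2 C] s2 b2 unfolding a2_def by simp
    have "\<bar>\<delta> * of_int x + c\<bar> \<le> 2 * C" using i1 i2 unfolding \<delta>_def c_def by (simp add: algebra_simps abs_le_iff)
    moreover have "\<delta> * of_int x + c = \<delta> * (of_int x + c / \<delta>)" using adpos by (simp add: algebra_simps)
    ultimately have "\<bar>\<delta>\<bar> * \<bar>of_int x + c / \<delta>\<bar> \<le> 2 * C" by (simp add: abs_mult)
    hence "\<bar>of_int x + c / \<delta>\<bar> \<le> 2 * C / \<bar>\<delta>\<bar>" using adpos by (simp add: pos_le_divide_eq mult.commute)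
    hence "x \<in> X" unfolding X_def lo_def L_def by (simp add: abs_le_iff add_divide_distrib[symmetric])
    moreover have "y \<in> Y x" using i1 unfolding Y_def by (simp add: abs_le_iff)
    ultimately show "x \<in> X \<and> y \<in> Y x" by simp
  qed
  have fS: "finite (Sigma X Y)" using X(1) Y(1) by simp
  have "real (lattice_count (strip l C \<inter> strip k C)) \<le> real (card (Sigma X Y))"
    unfolding lattice_count_def using card_mono[OF fS sub] by simp
  also have "\<dots> = (\<Sum>x\<in>X. real (card (Y x)))" using card_SigmaI[OF X(1), of Y] Y(1) by (simp add: of_nat_sum)
  also have "\<dots> \<le> (\<Sum>x\<in>X. 2 * C + 1)" by (rule sum_mono) (rule Y(2))
  also have "\<dots> = real (card X) * (2 * C + 1)" by simp
  also have "\<dots> \<le> (L + 1) * (2 * C + 1)" using X(2) assms by (intro mult_right_mono) auto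
  also have "\<dots> \<le> ((4 * C + 1) * real w / D) * (2 * C + 1)"
  proof (rule mult_right_mono)
    have Lq: "L = 4 * C * W / D" unfolding L_def ad using D1 W1 by simp
    have "L + 1 = (4 * C * W + D) / D" unfolding Lq using D1 by (simp add: add_divide_distrib)
    also have "(4 * C * W + D) / D \<le> (4 * C + 1) * real w / D"
    proof (rule divide_right_mono)
      have "4 * C * W \<le> 4 * C * real w" using assms unfolding W_def by simp
      moreover have "D \<le> real w" using DW unfolding W_def by simp
      ultimately show "4 * C * W + D \<le> (4 * C + 1) * real w" by (simp add: algebra_simps)
    qed (use D1 in simp)
    finally show "L + 1 \<le> (4 * C + 1) * real w / D" .
  qed (use assms in simp)
  also have "\<dots> = (4*C+1)*(2*C+1) * real w / \<bar>real e1 - real e2\<bar>" unfolding D_def by simp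
  finally show "real (lattice_count (strip l C \<inter> strip k C)) \<le> (4*C+1)*(2*C+1) * real w / \<bar>real e1 - real e2\<bar>" .
qed

end
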